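(* For each partial computable function $f:\mathbb{N}\to\mathbb{N}$ there exists a constant $c_f$ such that for all $n$ in the domain of $f$, $\alpha(\alpha(f(n)))\le \alpha(n)+c_f$.
   Context: Natural numbers are identified with finite binary strings. $\mathrm{K}$ denotes prefix-free Kolmogorov complexity with respect to a fixed optimal prefix-free machine $\mathbb{U}'$: $\mathrm{K}(x)=\min\{|y|:\mathbb{U}'(y)=x\}$, where $\mathbb{U}'$ has prefix-free domain and for every prefix-free machine $T$ there is $c_T$ with $\mathrm{K}(x)\le \min\{|y|:T(y)=x\}+c_T$. Solovay's $\alpha$-function is $\alpha(n)=\min\{\mathrm{K}(i) : i>n\}$. *)

theory Defs
  imports Main "HOL-Library.Sublist"
begin

datatype recf = Zero | Succ | Proj nat | Comp recf "recf list" | Prec recf recf | Mn recf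

inductive eval :: "recf \<Rightarrow> nat list \<Rightarrow> nat \<Rightarrow> bool" where
  eval_Zero: "eval Zero xs 0"
| eval_Succ: "eval Succ (x # xs) (Suc x)"
| eval_Proj: "i < length xs \<Longrightarrow> eval (Proj i) xs (xs ! i)"
| eval_Comp: "list_all2 (\<lambda>g y. eval g xs y) gs ys \<Longrightarrow> eval f ys z \<Longrightarrow> eval (Comp f gs) xs z"
| eval_Prec0: "eval f xs z \<Longrightarrow> eval (Prec f g) (0 # xs) z"
| eval_PrecS: "eval (Prec f g) (n # xs) y \<Longrightarrow> eval g (y # n # xs) z
               \<Longrightarrow> eval (Prec f g) (Suc n # xs) z"
| eval_Mn: "eval f (n # xs) 0 \<Longrightarrow> (\<forall>m<n. \<exists>y. eval f (m # xs) (Suc y))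
            \<Longrightarrow> eval (Mn f) xs n"

definition partial_computable :: "(nat \<Rightarrow> nat option) \<Rightarrow> bool" where
  "partial_computable f \<longleftrightarrow> (\<exists>r. \<forall>n y. eval r [n] y \<longleftrightarrow> f n = Some y)"

text \<open>Standard bijection: n corresponds to the binary expansion of n+1 with the
  leading 1 removed (0 = empty string, 1 = "0", 2 = "1", 3 = "00", ...).\<close>
fun bits :: "nat \<Rightarrow> bool list" where
  "bits n = (if n \<le> 1 then [] else bits (n div 2) @ [odd n])"

definition str :: "nat \<Rightarrow> bool list" where
  "str n = bits (Suc n)"

definition slen :: "nat \<Rightarrow> nat" where
  "slen n = length (str n)"

definition prefix_free_machine :: "(nat \<Rightarrow> nat option) \<Rightarrow> bool" where
  "prefix_free_machine M \<longleftrightarrow> partial_computable M \<and>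
     (\<forall>x y. M x \<noteq> None \<longrightarrow> M y \<noteq> None \<longrightarrow> prefix (str x) (str y) \<longrightarrow> x = y)"

definition optimal_pf_machine :: "(nat \<Rightarrow> nat option) \<Rightarrow> bool" where
  "optimal_pf_machine U \<longleftrightarrow> prefix_free_machine U \<and>
     (\<forall>T. prefix_free_machine T \<longrightarrow> (\<exists>c. \<forall>x y. T y = Some x \<longrightarrow>
        (\<exists>y'. U y' = Some x \<and> slen y' \<le> slen y + c)))"

definition K :: "(nat \<Rightarrow> nat option) \<Rightarrow> nat \<Rightarrow> nat" where
  "K U x = (LEAST k. \<exists>y. U y = Some x \<and> slen y = k)"

definition alpha :: "(nat \<Rightarrow> nat option) \<Rightarrow> nat \<Rightarrow> nat" where
  "alpha U n = (LEAST k. \<exists>i>n. K U i = k)"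

end

theory Submission
  imports Defs
begin

lemma eval_Zero_iff: "eval Zero xs z \<longleftrightarrow> z = 0"
  by (auto elim: eval.cases intro: eval.intros)
lemma eval_Succ_iff: "eval Succ (x#xs) z \<longleftrightarrow> z = Suc x"
  by (auto elim: eval.cases intro: eval.intros)
lemma eval_Proj_iff: "eval (Proj i) xs z \<longleftrightarrow> i < length xs \<and> z = xs!i"
  by (auto elim: eval.cases intro: eval.intros)
lemma eval_Comp_iff: "eval (Comp f gs) xs z \<longleftrightarrow> (\<exists>ys. list_all2 (\<lambda>g y. eval g xs y) gs ys \<and> eval f ys z)"
  by (auto elim: eval.cases intro: eval.intros)
lemma eval_Prec0_iff: "eval (Prec f g) (0#xs) z \<longleftrightarrow> eval f xs z"
  by (auto elim: eval.cases intro: eval.intros)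
lemma eval_PrecS_iff: "eval (Prec f g) (Suc n#xs) z \<longleftrightarrow> (\<exists>y. eval (Prec f g) (n#xs) y \<and> eval g (y#n#xs) z)"
  by (auto elim: eval.cases intro: eval.intros)
lemma eval_Mn_iff: "eval (Mn f) xs n \<longleftrightarrow> eval f (n#xs) 0 \<and> (\<forall>m<n. \<exists>y. eval f (m#xs) (Suc y))"
  by (auto elim: eval.cases intro: eval.intros)

lemmas eval_iffs = eval_Zero_iff eval_Succ_iff eval_Proj_iff eval_Comp_iff eval_Prec0_iff eval_PrecS_iff eval_Mn_iff

definition "addr = Prec (Proj 0) (Comp Succ [Proj 0])"
lemma eval_addr: "eval addr [a,b] z \<longleftrightarrow> z = a + b"
  unfolding addr_def by (induction a arbitrary: z) (auto simp: eval_iffs list_all2_Cons1)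

definition "predr = Prec Zero (Proj 1)"
lemma eval_predr: "eval predr [a] z \<longleftrightarrow> z = a - 1"
  unfolding predr_def by (induction a arbitrary: z) (auto simp: eval_iffs list_all2_Cons1)

definition "subr = Prec (Proj 0) (Comp predr [Proj 0])"
lemma eval_subr: "eval subr [a,x] z \<longleftrightarrow> z = x - a"
  unfolding subr_def by (induction a arbitrary: z) (auto simp: eval_iffs list_all2_Cons1 eval_predr)

definition "powr = Prec (Comp Succ [Comp Succ [Zero]]) (Comp addr [Proj 0, Proj 0])"
lemma eval_powr: "eval powr [n,x] z \<longleftrightarrow> z = 2 ^ Suc n"
  unfolding powr_def by (induction n arbitrary: z) (auto simp: eval_iffs list_all2_Cons1 eval_addr)

definition "testr = Comp addr [Comp subr [Proj 1, powr], Comp subr [powr, Proj 1]]"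
lemma eval_testr: "eval testr [n,x] z \<longleftrightarrow> z = (2 ^ Suc n - x) + (x - 2 ^ Suc n)"
  unfolding testr_def by (auto simp: eval_iffs list_all2_Cons1 eval_addr eval_subr eval_powr)

lemma eval_Mn_testr: "eval (Mn testr) [x] n \<longleftrightarrow> x = 2 ^ Suc n"
proof -
  have e: "0 = ((a::nat) - b) + (b - a) \<longleftrightarrow> a = b" for a b by auto
  have s: "(\<exists>y. Suc y = v) \<longleftrightarrow> v \<noteq> 0" for v :: nat by (cases v) auto
  have ne: "m < n \<Longrightarrow> (2::nat) ^ Suc m \<noteq> 2 ^ Suc n" for m
    by (simp add: power_inject_exp)
  have e2: "((a::nat) - b) + (b - a) = 0 \<longleftrightarrow> a = b" for a b by auto
  have "eval (Mn testr) [x] n \<longleftrightarrow> 2 ^ Suc n = x \<and> (\<forall>m<n. 2 ^ Suc m \<noteq> x)"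
    unfolding eval_Mn_iff eval_testr s e e2 by (rule refl)
  also have "\<dots> \<longleftrightarrow> x = 2 ^ Suc n" using ne by auto
  finally show ?thesis .
qed

fun sucs :: "nat \<Rightarrow> recf \<Rightarrow> recf" where
  "sucs 0 r = r" | "sucs (Suc k) r = Comp Succ [sucs k r]"
lemma eval_sucs: "eval (sucs k r) xs z \<longleftrightarrow> (\<exists>v. eval r xs v \<and> z = v + k)"
proof (induction k arbitrary: z)
  case (Suc k)
  show ?case
  proof
    assume "eval (sucs (Suc k) r) xs z" thus "\<exists>v. eval r xs v \<and> z = v + Suc k"
      using Suc by (auto simp: eval_iffs list_all2_Cons1)
  next
    assume "\<exists>v. eval r xs v \<and> z = v + Suc k"
    then obtain v where v: "eval r xs v" "z = v + Suc k" by blast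
    have "eval (sucs k r) xs (v + k)" using Suc v by blast
    thus "eval (sucs (Suc k) r) xs z" using v by (auto simp: eval_iffs list_all2_Cons1)
  qed
qed simp


declare bits.simps[simp del]

lemma bits_pow: "bits (2 ^ k) = replicate k False"
proof (induction k)
  case 0 then show ?case by (subst bits.simps) simp
next
  case (Suc k)
  have h: "\<not> (2::nat) ^ Suc k \<le> 1"
    by (metis Suc_1 lessI not_less one_less_power zero_less_Suc)
  have "bits (2 ^ Suc k) = bits (2 ^ Suc k div 2) @ [odd ((2::nat) ^ Suc k)]"
    using h by (subst bits.simps) simp
  also have "\<dots> = replicate k False @ [False]" using Suc by simp
  finally show ?case by (simp add: replicate_append_same)
qed

lemma str_pow: "str (2 ^ Suc n) = replicate n False @ [True]"
proof -
  have "bits (Suc (2 ^ Suc n)) = bits (Suc (2 ^ Suc n) div 2) @ [odd (Suc (2 ^ Suc n))]"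
    by (subst bits.simps) simp
  also have "Suc (2 ^ Suc n) div 2 = 2 ^ n" by simp
  finally show ?thesis by (simp add: str_def bits_pow)
qed

lemma slen_pow: "slen (2 ^ Suc n) = Suc n"
  using str_pow[of n] by (simp add: slen_def)

lemma prefix_rep: "prefix (replicate a False @ [True]) (replicate b False @ [True]) \<Longrightarrow> a = b"
proof (induction a arbitrary: b)
  case 0 then show ?case
    by (cases b) simp_all
next
  case (Suc a)
  show ?case
  proof (cases b)
    case 0 with Suc.prems show ?thesis by simp
  next
    case (Suc b')
    with Suc.prems have "prefix (replicate a False @ [True]) (replicate b' False @ [True])" by simp
    from Suc.IH[OF this] show ?thesis using \<open>b = Suc b'\<close> by simp
  qed
qed

lemma pow_inj: "(2::nat) ^ Suc a = 2 ^ Suc b \<longleftrightarrow> a = b"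
  by (simp add: power_inject_exp)

lemma K_le: "U y = Some x \<Longrightarrow> K U x \<le> slen y"
  unfolding K_def by (rule Least_le) blast

lemma K_attained: "U y = Some x \<Longrightarrow> \<exists>y. U y = Some x \<and> slen y = K U x"
  unfolding K_def by (rule LeastI_ex) blast

lemma alpha_le: "i > a \<Longrightarrow> alpha U a \<le> K U i"
  unfolding alpha_def by (rule Least_le) blast

lemma alpha_attained: "\<exists>i>a. K U i = alpha U a"
  unfolding alpha_def by (rule LeastI_ex) (rule exI[of _ "K U (Suc a)"], auto)

lemma eval_Mn_Proj1: "eval (Mn (Proj (Suc 0))) [x] n \<longleftrightarrow> x = 0 \<and> n = 0"
proof -
  have "eval (Mn (Proj (Suc 0))) [x] n \<longleftrightarrow> x = 0 \<and> (\<forall>m<n. \<exists>y. Suc y = x)"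
    unfolding eval_Mn_iff eval_Proj_iff by simp
  also have "\<dots> \<longleftrightarrow> x = 0 \<and> n = 0" by (cases n) auto
  finally show ?thesis .
qed

theorem lemma2:
  fixes U f :: "nat \<Rightarrow> nat option"
  assumes "optimal_pf_machine U"
    and "partial_computable f"
  shows "\<exists>c. \<forall>n m. f n = Some m \<longrightarrow> alpha U (alpha U m) \<le> alpha U n + c"
proof -
  have pfU: "prefix_free_machine U" and opt: "\<And>T. prefix_free_machine T \<Longrightarrow> (\<exists>c. \<forall>x y. T y = Some x \<longrightarrow>
        (\<exists>y'. U y' = Some x \<and> slen y' \<le> slen y + c))"
    using assms(1) unfolding optimal_pf_machine_def by auto
  obtain rU where rU: "\<And>n y. eval rU [n] y \<longleftrightarrow> U n = Some y"
    using pfU unfolding prefix_free_machine_def partial_computable_def by blast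
  obtain rf where rf: "\<And>n y. eval rf [n] y \<longleftrightarrow> f n = Some y"
    using assms(2) unfolding partial_computable_def by blast
  have surj: "\<exists>y. U y = Some i" for i
  proof -
    define T where "T = (\<lambda>x::nat. if x = 0 then Some i else None)"
    have "eval (sucs i (Comp Zero [Mn (Proj (Suc 0))])) [x] z \<longleftrightarrow> T x = Some z" for x z
      by (auto simp: T_def eval_sucs eval_iffs list_all2_Cons1 eval_Mn_Proj1 simp del: eval_Mn_iff)
    hence "partial_computable T" unfolding partial_computable_def by blast
    hence "prefix_free_machine T"
      unfolding prefix_free_machine_def by (auto simp: T_def)
    from opt[OF this] obtain c where "\<forall>x y. T y = Some x \<longrightarrow> (\<exists>y'. U y' = Some x \<and> slen y' \<le> slen y + c)"
      by blast
    from this[rule_format, of 0 i] show ?thesis by (auto simp: T_def)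
  qed
  \<comment> \<open>unary-code machine\<close>
  define T1 where "T1 = (\<lambda>x::nat. if \<exists>n. x = 2 ^ Suc n then map_option Suc (f (THE n. x = 2 ^ Suc n)) else None)"
  have T1pow: "T1 ((2::nat) ^ Suc n) = map_option Suc (f n)" for n
    unfolding T1_def by (auto simp: pow_inj)
  have "eval (Comp Succ [Comp rf [Mn testr]]) [x] z \<longleftrightarrow> T1 x = Some z" for x z
  proof
    assume "eval (Comp Succ [Comp rf [Mn testr]]) [x] z"
    then obtain n v where "x = 2 ^ Suc n" "f n = Some v" "z = Suc v"
      by (auto simp: eval_iffs list_all2_Cons1 eval_Mn_testr rf simp del: eval_Mn_iff)
    thus "T1 x = Some z" using T1pow[of n] by simp
  next
    assume h: "T1 x = Some z"
    then obtain n where n: "x = 2 ^ Suc n" unfolding T1_def by (auto split: if_splits)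
    with h obtain v where "f n = Some v" "z = Suc v" using T1pow[of n] by (cases "f n") auto
    thus "eval (Comp Succ [Comp rf [Mn testr]]) [x] z"
      using n by (auto simp: eval_iffs list_all2_Cons1 eval_Mn_testr rf simp del: eval_Mn_iff)
  qed
  hence pcT1: "partial_computable T1" unfolding partial_computable_def by blast
  have domT1: "T1 x \<noteq> None \<Longrightarrow> \<exists>n. x = 2 ^ Suc n" for x
    unfolding T1_def by (auto split: if_splits)
  have "prefix_free_machine T1"
    unfolding prefix_free_machine_def
  proof (intro conjI allI impI)
    show "partial_computable T1" by (rule pcT1)
  next
    fix x y assume "T1 x \<noteq> None" "T1 y \<noteq> None" "prefix (str x) (str y)"
    then obtain a b where ab: "x = 2 ^ Suc a" "y = 2 ^ Suc b" "prefix (str (2 ^ Suc a)) (str (2 ^ Suc b))"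
      using domT1 by blast
    have "a = b" using ab(3) unfolding str_pow by (rule prefix_rep)
    thus "x = y" using ab by simp
  qed
  from opt[OF this] obtain c1 where c1: "\<And>x y. T1 y = Some x \<Longrightarrow> (\<exists>y'. U y' = Some x \<and> slen y' \<le> slen y + c1)"
    by blast
  define d where "d = Suc c1"
  have am: "alpha U m \<le> n + d" if "f n = Some m" for n m
  proof -
    from c1[of "2 ^ Suc n" "Suc m"] that obtain y' where "U y' = Some (Suc m)" "slen y' \<le> Suc n + c1"
      using T1pow[of n] slen_pow[of n] by auto
    hence "K U (Suc m) \<le> Suc n + c1" using K_le by (metis le_trans)
    moreover have "alpha U m \<le> K U (Suc m)" by (rule alpha_le) simp
    ultimately show ?thesis by (simp add: d_def)
  qed
  define V where "V = (\<lambda>x. map_option (\<lambda>v. v + d) (U x))"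
  have "eval (sucs d rU) [x] z \<longleftrightarrow> V x = Some z" for x z
    by (auto simp: V_def eval_sucs rU)
  hence "prefix_free_machine V"
    using pfU unfolding prefix_free_machine_def partial_computable_def V_def by auto
  from opt[OF this] obtain c2 where c2: "\<And>x y. V y = Some x \<Longrightarrow> (\<exists>y'. U y' = Some x \<and> slen y' \<le> slen y + c2)"
    by blast
  have "alpha U (alpha U m) \<le> alpha U n + c2" if fm: "f n = Some m" for n m
  proof -
    obtain i where i: "i > n" "K U i = alpha U n" using alpha_attained by blast
    obtain y0 where "U y0 = Some i" using surj by blast
    then obtain y where y: "U y = Some i" "slen y = K U i" using K_attained by blast
    then obtain y' where y': "U y' = Some (i + d)" "slen y' \<le> slen y + c2"
      using c2[of y "i + d"] by (auto simp: V_def)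
    have "alpha U (alpha U m) \<le> K U (i + d)"
      using am[OF fm] i by (intro alpha_le) simp
    also have "\<dots> \<le> slen y'" using y'(1) by (rule K_le)
    finally show ?thesis using y' y i by simp
  qed
  thus ?thesis by blast
qed

end
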